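(* Let an explicit non-confluent DJ-irreducible Runge--Kutta method $(A,b)$ be given such that at least one entry of the matrix $A$ or of the vector $b$ is negative. Then there exist nonnegative initial data and a choice of nonnegative functions $q_k$ such that the numerical solution of $$u_k'(t)=q_k(u(t),t)\,\frac{u_{k-1}(t)-u_k(t)}{\Delta x},\quad k=1,\dots,N,\qquad u_0:=u_N,$$ obtained with the method includes a negative value. Consequently $\gamma(A,b)=0$.
   Context: An $m$-stage explicit Runge--Kutta method has strictly lower-triangular Butcher matrix $A=(a_{ij})\in\mathbb{R}^{m\times m}$, weight vector $b\in\mathbb{R}^m$ and nodes $c_i=\sum_ja_{ij}$; non-confluent means the $c_i$ are pairwise distinct. It is DJ-reducible if there is a nonempty set $S\subseteq\{1,\dots,m\}$ of stage indices with $b_j=0$ for all $j\in S$ and $a_{ij}=0$ for all $i\notin S$, $j\in S$ (i.e. the stages in $S$ do not affect the result); otherwise DJ-irreducible. Applied to the ODE system with step $\Delta t$: $y^i_k=u^n_k+\sum_{j<i}a_{ij}\xi^j_k(y^j_{k-1}-y^j_k)$, $u^{n+1}_k=u^n_k+\sum_ib_i\xi^i_k(y^i_{k-1}-y^i_k)$, with $\xi^j_k=\frac{\Delta t}{\Delta x}q_k(y^j,t_n+c_j\Delta t)$ and periodic indices. Treating the $\xi^j_\ell$ as independent variables on the grid $\ell\in\mathbb{Z}$, $u^{n+1}_k=\sum_{i=0}^mP_i(\xi)u^n_{k-i}$ for polynomials $P_i$ (independent of $k$) in the $m(m+1)/2$ variables $\xi^j_\ell$, $1\le j\le m$, $k-(m-j)\le\ell\le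 k$. The step-size coefficient is $\gamma(A,b)=\sup\{\delta\ge0:P_i(\xi)\ge0$ for all $0\le i\le m$, all $\xi\in[0,\delta]^{m(m+1)/2}\}$ (or $0$ if the set is empty). *)

theory Defs
  imports "HOL-Analysis.Analysis"
begin

definition rk_explicit :: "nat \<Rightarrow> (nat \<Rightarrow> nat \<Rightarrow> real) \<Rightarrow> bool" where
  "rk_explicit m A \<longleftrightarrow> (\<forall>i\<in>{1..m}. \<forall>j\<in>{1..m}. i \<le> j \<longrightarrow> A i j = 0)"

definition rk_nodes :: "nat \<Rightarrow> (nat \<Rightarrow> nat \<Rightarrow> real) \<Rightarrow> nat \<Rightarrow> real" where
  "rk_nodes m A i = (\<Sum>j=1..m. A i j)"

definition rk_non_confluent :: "nat \<Rightarrow> (nat \<Rightarrow> nat \<Rightarrow> real) \<Rightarrow> bool" where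
  "rk_non_confluent m A \<longleftrightarrow> inj_on (rk_nodes m A) {1..m}"

definition DJ_reducible :: "nat \<Rightarrow> (nat \<Rightarrow> nat \<Rightarrow> real) \<Rightarrow> (nat \<Rightarrow> real) \<Rightarrow> bool" where
  "DJ_reducible m A b \<longleftrightarrow> (\<exists>S. S \<subseteq> {1..m} \<and> S \<noteq> {} \<and> (\<forall>j\<in>S. b j = 0) \<and>
      (\<forall>i\<in>{1..m} - S. \<forall>j\<in>S. A i j = 0))"

definition DJ_irreducible :: "nat \<Rightarrow> (nat \<Rightarrow> nat \<Rightarrow> real) \<Rightarrow> (nat \<Rightarrow> real) \<Rightarrow> bool" where
  "DJ_irreducible m A b \<longleftrightarrow> \<not> DJ_reducible m A b"

text \<open>Stage vectors y^1, ..., y^i (list position j-1 holds y^j) of one RK step for the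
  semi-discretisation on a grid of type 'g with left neighbour map pr; xi j k Y is the
  factor xi^j_k, which may depend on the stage vector Y = y^j.\<close>

primrec rk_stages :: "(nat \<Rightarrow> nat \<Rightarrow> real) \<Rightarrow> ('g \<Rightarrow> 'g) \<Rightarrow> (nat \<Rightarrow> 'g \<Rightarrow> ('g \<Rightarrow> real) \<Rightarrow> real)
    \<Rightarrow> ('g \<Rightarrow> real) \<Rightarrow> nat \<Rightarrow> ('g \<Rightarrow> real) list" where
  "rk_stages A pr xi u 0 = []"
| "rk_stages A pr xi u (Suc i) =
     (let ys = rk_stages A pr xi u i in
      ys @ [(\<lambda>k. u k + (\<Sum>j=1..i. A (Suc i) j * xi j k (ys ! (j - 1))
                 * ((ys ! (j - 1)) (pr k) - (ys ! (j - 1)) k)))])"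

definition rk_step :: "nat \<Rightarrow> (nat \<Rightarrow> nat \<Rightarrow> real) \<Rightarrow> (nat \<Rightarrow> real) \<Rightarrow> ('g \<Rightarrow> 'g)
    \<Rightarrow> (nat \<Rightarrow> 'g \<Rightarrow> ('g \<Rightarrow> real) \<Rightarrow> real) \<Rightarrow> ('g \<Rightarrow> real) \<Rightarrow> ('g \<Rightarrow> real)" where
  "rk_step m A b pr xi u =
     (let ys = rk_stages A pr xi u m in
      (\<lambda>k. u k + (\<Sum>i=1..m. b i * xi i k (ys ! (i - 1))
                 * ((ys ! (i - 1)) (pr k) - (ys ! (i - 1)) k))))"

definition per_prev :: "nat \<Rightarrow> nat \<Rightarrow> nat" where
  "per_prev N k = (if k = 1 then N else k - 1)"

text \<open>One step of the method applied to u_k' = q_k(u,t) (u_{k-1}-u_k)/dx, k = 1..N,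
  from time tn with step dt.  q k v t is q_k(v,t); v is the grid vector (components 1..N,
  zero elsewhere).\<close>

definition ode_rk_step :: "nat \<Rightarrow> (nat \<Rightarrow> nat \<Rightarrow> real) \<Rightarrow> (nat \<Rightarrow> real) \<Rightarrow> nat \<Rightarrow> real \<Rightarrow> real
    \<Rightarrow> real \<Rightarrow> (nat \<Rightarrow> (nat \<Rightarrow> real) \<Rightarrow> real \<Rightarrow> real) \<Rightarrow> (nat \<Rightarrow> real) \<Rightarrow> (nat \<Rightarrow> real)" where
  "ode_rk_step m A b N dx dt tn q u =
     rk_step m A b (per_prev N)
       (\<lambda>j k Y. dt / dx * q k (\<lambda>i. if i \<in> {1..N} then Y i else 0) (tn + rk_nodes m A j * dt)) u"

text \<open>The polynomials P_i, evaluated at given values xi j l of the independent variables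
  xi^j_l on the grid l \<in> \<int> (with k = 0): u^{n+1}_0 = \<Sum>i. P_i(xi) u^n_{-i}, so P_i(xi) is the
  result of the step at k = 0 applied to the unit vector at grid point -i.\<close>

definition rk_P :: "nat \<Rightarrow> (nat \<Rightarrow> nat \<Rightarrow> real) \<Rightarrow> (nat \<Rightarrow> real) \<Rightarrow> nat \<Rightarrow> (nat \<Rightarrow> int \<Rightarrow> real) \<Rightarrow> real" where
  "rk_P m A b i \<xi> = rk_step m A b (\<lambda>l. l - 1) (\<lambda>j l Y. \<xi> j l) (\<lambda>l. if l = - int i then 1 else 0) 0"

definition rk_gamma_set :: "nat \<Rightarrow> (nat \<Rightarrow> nat \<Rightarrow> real) \<Rightarrow> (nat \<Rightarrow> real) \<Rightarrow> real set" where
  "rk_gamma_set m A b = {\<delta>. \<delta> \<ge> 0 \<and> (\<forall>i\<le>m. \<forall>\<xi>.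
      (\<forall>j\<in>{1..m}. \<forall>l\<in>{- int (m - j)..0}. 0 \<le> \<xi> j l \<and> \<xi> j l \<le> \<delta>) \<longrightarrow> rk_P m A b i \<xi> \<ge> 0)}"

definition rk_gamma :: "nat \<Rightarrow> (nat \<Rightarrow> nat \<Rightarrow> real) \<Rightarrow> (nat \<Rightarrow> real) \<Rightarrow> ereal" where
  "rk_gamma m A b = (if rk_gamma_set m A b = {} then 0 else Sup (ereal ` rk_gamma_set m A b))"

end

theory Submission
  imports Defs
begin

definition cW :: "(nat \<Rightarrow> nat \<Rightarrow> real) \<Rightarrow> (nat \<Rightarrow> nat) \<Rightarrow> real \<Rightarrow> nat \<Rightarrow> nat \<Rightarrow> real" where
  "cW A js x i s = (\<Prod>r\<in>{s..<i}. A (js r) (js (Suc r))) * x ^ (i - s)"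

lemma cW_i: "cW A js x i i = 1" by (simp add: cW_def)

lemma cW_step: "s < i \<Longrightarrow> cW A js x i s = A (js s) (js (Suc s)) * x * cW A js x i (Suc s)"
proof -
  assume a: "s < i"
  have "i - s = Suc (i - Suc s)" using a by simp
  then show ?thesis using a by (simp add: cW_def prod.atLeast_Suc_lessThan)
qed

lemma stages_chain:
  fixes pr :: "'g \<Rightarrow> 'g" and p :: "nat \<Rightarrow> 'g"
  assumes xi: "\<And>j k Y. j \<in> {1..m} \<Longrightarrow> xi j k Y = (if \<exists>t<i. k = p t \<and> j = js (Suc t) then x else 0)"
    and js: "\<And>s. s \<in> {1..i} \<Longrightarrow> js s \<in> {1..m}"
    and dec: "\<And>s. 1 \<le> s \<Longrightarrow> s < i \<Longrightarrow> js (Suc s) < js s"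
    and inj: "inj_on p {0..i}"
    and prp: "\<And>t. t < i \<Longrightarrow> pr (p t) = p (Suc t)"
    and u1: "u (p i) = 1" and u0: "\<And>t. t < i \<Longrightarrow> u (p t) = 0"
  shows "n \<le> m \<Longrightarrow> length (rk_stages A pr xi u n) = n \<and> (\<forall>j\<in>{1..n}. \<forall>t\<le>i.
     (rk_stages A pr xi u n ! (j-1)) (p t) = (if t = i then 1 else if js (Suc t) < j
        then A j (js (Suc t)) * x * cW A js x i (Suc t) else 0))"
proof (induction n)
  case 0
  then show ?case by simp
next
  case (Suc n)
  define ys where "ys = rk_stages A pr xi u n"
  from Suc have IH: "length ys = n" "\<forall>j\<in>{1..n}. \<forall>t\<le>i. (ys!(j-1)) (p t) = (if t = i then 1 else if js (Suc t) < j
        then A j (js (Suc t)) * x * cW A js x i (Suc t) else 0)" by (auto simp: ys_def)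
  define new where "new = (\<lambda>k. u k + (\<Sum>j=1..n. A (Suc n) j * xi j k (ys ! (j - 1)) * ((ys ! (j - 1)) (pr k) - (ys ! (j - 1)) k)))"
  have eq: "rk_stages A pr xi u (Suc n) = ys @ [new]" by (simp add: ys_def new_def Let_def)
  have newval: "new (p t) = (if t = i then 1 else if js (Suc t) < Suc n
        then A (Suc n) (js (Suc t)) * x * cW A js x i (Suc t) else 0)" if tl: "t \<le> i" for t
  proof (cases "t = i")
    case True
    have "xi j (p i) Y = 0" if "j \<in> {1..n}" for j Y
    proof -
      have "\<not> (\<exists>t<i. p i = p t \<and> j = js (Suc t))"
        using inj by (auto dest: inj_onD)
      then show ?thesis using xi[of j "p i" Y] that Suc.prems by auto
    qed
    then show ?thesis using True u1 by (simp add: new_def)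
  next
    case False
    with tl have ti: "t < i" by simp
    define J where "J = js (Suc t)"
    have J1: "J \<ge> 1" "J \<le> m" using js[of "Suc t"] ti by (auto simp: J_def)
    have xiJ: "xi j (p t) Y = (if j = J then x else 0)" if "j \<in> {1..n}" for j Y
    proof -
      have "(\<exists>t'<i. p t = p t' \<and> j = js (Suc t')) \<longleftrightarrow> j = J"
        using inj ti by (auto simp: J_def dest: inj_onD)
      then show ?thesis using xi[of j "p t" Y] that Suc.prems by auto
    qed
    have "new (p t) = (\<Sum>j=1..n. if j = J then A (Suc n) J * x * ((ys ! (J - 1)) (pr (p t)) - (ys ! (J - 1)) (p t)) else 0)"
    proof -
      have "\<forall>j\<in>{1..n}. A (Suc n) j * xi j (p t) (ys ! (j - 1)) * ((ys ! (j - 1)) (pr (p t)) - (ys ! (j - 1)) (p t))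
         = (if j = J then A (Suc n) J * x * ((ys ! (J - 1)) (pr (p t)) - (ys ! (J - 1)) (p t)) else 0)"
        by (auto simp: xiJ)
      then show ?thesis unfolding new_def using u0[OF ti] by (auto intro!: sum.cong)
    qed
    also have "\<dots> = (if J \<in> {1..n} then A (Suc n) J * x * ((ys ! (J - 1)) (pr (p t)) - (ys ! (J - 1)) (p t)) else 0)"
      by (rule sum.delta) simp
    also have "\<dots> = (if J < Suc n then A (Suc n) J * x * cW A js x i (Suc t) else 0)"
    proof (cases "J < Suc n")
      case True
      hence Jn: "J \<in> {1..n}" using J1 by auto
      have a: "(ys ! (J - 1)) (p t) = 0" using IH(2) Jn ti False by (auto simp: J_def)
      have b: "(ys ! (J - 1)) (p (Suc t)) = cW A js x i (Suc t)"
      proof (cases "Suc t = i")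
        case True
        then show ?thesis using IH(2) Jn by (simp add: cW_i)
      next
        case False
        hence "Suc t < i" using ti by simp
        moreover have "js (Suc (Suc t)) < J" using dec[of "Suc t"] \<open>Suc t < i\<close> by (simp add: J_def)
        ultimately show ?thesis using IH(2) Jn False cW_step[of "Suc t" i A js x]
          by (simp add: J_def)
      qed
      show ?thesis using True Jn a b prp[OF ti] by simp
    next
      case False
      then show ?thesis using J1 by auto
    qed
    finally show ?thesis using False by (simp add: J_def)
  qed
  show ?case
  proof (intro conjI ballI allI impI)
    show "length (rk_stages A pr xi u (Suc n)) = Suc n" using eq IH by simp
  next
    fix j t assume j: "j \<in> {1..Suc n}" and t: "t \<le> i"
    show "(rk_stages A pr xi u (Suc n) ! (j - 1)) (p t) = (if t = i then 1 else if js (Suc t) < j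
        then A j (js (Suc t)) * x * cW A js x i (Suc t) else 0)"
    proof (cases "j = Suc n")
      case True
      then show ?thesis using eq IH newval[OF t] by (simp add: nth_append)
    next
      case False
      hence "j \<in> {1..n}" using j by auto
      then show ?thesis using eq IH t by (auto simp: nth_append)
    qed
  qed
qed

lemma step_chain:
  fixes pr :: "'g \<Rightarrow> 'g" and p :: "nat \<Rightarrow> 'g"
  assumes xi: "\<And>j k Y. j \<in> {1..m} \<Longrightarrow> xi j k Y = (if \<exists>t<i. k = p t \<and> j = js (Suc t) then x else 0)"
    and js: "\<And>s. s \<in> {1..i} \<Longrightarrow> js s \<in> {1..m}"
    and dec: "\<And>s. 1 \<le> s \<Longrightarrow> s < i \<Longrightarrow> js (Suc s) < js s"
    and inj: "inj_on p {0..i}"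
    and prp: "\<And>t. t < i \<Longrightarrow> pr (p t) = p (Suc t)"
    and u1: "u (p i) = 1" and u0: "\<And>t. t < i \<Longrightarrow> u (p t) = 0"
    and i1: "1 \<le> i"
  shows "rk_step m A b pr xi u (p 0) = b (js 1) * (\<Prod>r\<in>{1..<i}. A (js r) (js (Suc r))) * x ^ i"
proof -
  define ys where "ys = rk_stages A pr xi u m"
  have IH: "length ys = m" "\<forall>j\<in>{1..m}. \<forall>t\<le>i. (ys!(j-1)) (p t) = (if t = i then 1 else if js (Suc t) < j
        then A j (js (Suc t)) * x * cW A js x i (Suc t) else 0)"
    using stages_chain[where xi=xi and p=p and js=js and x=x and i=i and m=m and pr=pr and u=u and A=A and n=m, OF assms(1-7)] by (auto simp: ys_def)
  define J where "J = js 1"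
  have Jn: "J \<in> {1..m}" using js[of 1] i1 by (auto simp: J_def)
  have xiJ: "xi j (p 0) Y = (if j = J then x else 0)" if "j \<in> {1..m}" for j Y
  proof -
    have "(\<exists>t'<i. p 0 = p t' \<and> j = js (Suc t')) \<longleftrightarrow> j = J"
    proof
      assume "\<exists>t'<i. p 0 = p t' \<and> j = js (Suc t')"
      then show "j = J" using inj by (auto simp: J_def dest: inj_onD)
    next
      assume "j = J"
      then show "\<exists>t'<i. p 0 = p t' \<and> j = js (Suc t')" 

      proof -
        have "0 < i \<and> p 0 = p 0 \<and> j = js (Suc 0)" using i1 \<open>j = J\<close> by (simp add: J_def)
        then show ?thesis by blast
      qed
    qed
    then show ?thesis using xi[of j "p 0" Y] that by auto
  qed
  have "rk_step m A b pr xi u (p 0) = (\<Sum>j=1..m. if j = J then b J * x * ((ys ! (J - 1)) (pr (p 0)) - (ys ! (J - 1)) (p 0)) else 0)"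
  proof -
    have "\<forall>j\<in>{1..m}. b j * xi j (p 0) (ys ! (j - 1)) * ((ys ! (j - 1)) (pr (p 0)) - (ys ! (j - 1)) (p 0))
         = (if j = J then b J * x * ((ys ! (J - 1)) (pr (p 0)) - (ys ! (J - 1)) (p 0)) else 0)"
      by (auto simp: xiJ)
    then show ?thesis unfolding rk_step_def Let_def ys_def[symmetric] using u0[of 0] i1 by (auto intro!: sum.cong)
  qed
  also have "\<dots> = b J * x * ((ys ! (J - 1)) (pr (p 0)) - (ys ! (J - 1)) (p 0))"
    using Jn by (subst sum.delta) auto
  also have "\<dots> = b J * x * cW A js x i 1"
  proof -
    have a: "(ys ! (J - 1)) (p 0) = 0" using IH(2) Jn i1 by (auto simp: J_def)
    have b: "(ys ! (J - 1)) (p 1) = cW A js x i 1"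
    proof (cases "1 = i")
      case True
      then show ?thesis using IH(2) Jn by (simp add: cW_i)
    next
      case False
      hence "1 < i" using i1 by simp
      moreover have "js (Suc 1) < J" using dec[of 1] \<open>1 < i\<close> by (simp add: J_def)
      ultimately show ?thesis using IH(2) Jn False cW_step[of 1 i A js x]
        by (simp add: J_def)
    qed
    show ?thesis using a b prp[of 0] i1 by simp
  qed
  also have "\<dots> = b (js 1) * (\<Prod>r\<in>{1..<i}. A (js r) (js (Suc r))) * x ^ i"
  proof -
    have "x * x ^ (i - 1) = x ^ i" using i1 by (simp add: power_eq_if)
    then show ?thesis unfolding cW_def J_def by (simp add: mult_ac)
  qed
  finally show ?thesis .
qed


definition good :: "nat \<Rightarrow> nat \<Rightarrow> (nat \<Rightarrow> nat) \<Rightarrow> bool" where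
  "good m i js \<longleftrightarrow> 1 \<le> i \<and> (\<forall>s\<in>{1..i}. js s \<in> {1..m}) \<and> (\<forall>s. 1 \<le> s \<longrightarrow> s < i \<longrightarrow> js (Suc s) < js s)"

definition cp :: "(nat \<Rightarrow> nat \<Rightarrow> real) \<Rightarrow> (nat \<Rightarrow> real) \<Rightarrow> (nat \<Rightarrow> nat) \<Rightarrow> nat \<Rightarrow> real" where
  "cp A b js i = b (js 1) * (\<Prod>r\<in>{1..<i}. A (js r) (js (Suc r)))"

lemma good_one: "j \<in> {1..m} \<Longrightarrow> good m 1 (\<lambda>_. j) \<and> cp A b (\<lambda>_. j) 1 = b j"
  by (auto simp: good_def cp_def)

lemma good_ext:
  assumes g: "good m i js" and j: "j \<in> {1..m}" and ji: "j < js i"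
  shows "good m (Suc i) (js(Suc i := j)) \<and> cp A b (js(Suc i := j)) (Suc i) = cp A b js i * A (js i) j"
proof
  have i1: "1 \<le> i" using g by (simp add: good_def)
  show "good m (Suc i) (js(Suc i := j))"
    unfolding good_def
  proof (intro conjI allI impI ballI)
    fix s assume "s \<in> {1..Suc i}" then show "(js(Suc i := j)) s \<in> {1..m}"
      using g j by (auto simp: good_def)
  next
    fix s assume "1 \<le> s" "s < Suc i"
    then show "(js(Suc i := j)) (Suc s) < (js(Suc i := j)) s"
      using g ji by (cases "s = i") (auto simp: good_def)
  qed simp
  have "(\<Prod>r\<in>{1..<Suc i}. A ((js(Suc i := j)) r) ((js(Suc i := j)) (Suc r)))
      = (\<Prod>r\<in>{1..<i}. A ((js(Suc i := j)) r) ((js(Suc i := j)) (Suc r))) * A (js i) j"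
    using i1 by (simp add: prod.atLeastLessThan_Suc)
  also have "(\<Prod>r\<in>{1..<i}. A ((js(Suc i := j)) r) ((js(Suc i := j)) (Suc r)))
      = (\<Prod>r\<in>{1..<i}. A (js r) (js (Suc r)))"
    by (rule prod.cong) auto
  finally show "cp A b (js(Suc i := j)) (Suc i) = cp A b js i * A (js i) j"
    using i1 by (simp add: cp_def mult_ac)
qed

lemma good_le:
  assumes g: "good m i js" shows "i \<le> m"
proof -
  have "\<forall>s. 1 \<le> s \<longrightarrow> s \<le> i \<longrightarrow> js s + s \<le> m + 1"
  proof (intro allI)
    fix s show "1 \<le> s \<longrightarrow> s \<le> i \<longrightarrow> js s + s \<le> m + 1"
    proof (induction s)
      case 0 then show ?case by simp
    next
      case (Suc s)
      show ?case
      proof (intro impI)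
        assume a: "Suc s \<le> i"
        show "js (Suc s) + Suc s \<le> m + 1"
        proof (cases "s = 0")
          case True then show ?thesis using g a by (auto simp: good_def)
        next
          case False
          then have "js s + s \<le> m + 1" "js (Suc s) < js s" using Suc a g by (auto simp: good_def)
          then show ?thesis by simp
        qed
      qed
    qed
  qed
  moreover have "js i \<ge> 1" using g by (auto simp: good_def)
  moreover have "1 \<le> i" using g by (simp add: good_def)
  ultimately have "js i + i \<le> m + 1" "js i \<ge> 1" by blast+
  then show ?thesis by linarith
qed

lemma neg_chain:
  assumes ex: "rk_explicit m A" and irr: "DJ_irreducible m A b"
    and neg: "(\<exists>i\<in>{1..m}. \<exists>j\<in>{1..m}. A i j < 0) \<or> (\<exists>j\<in>{1..m}. b j < 0)"
  shows "\<exists>i js. good m i js \<and> cp A b js i < 0"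
proof -
  define R where "R = {j \<in> {1..m}. \<exists>i js. good m i js \<and> js i = j \<and> cp A b js i \<noteq> 0}"
  have R: "{1..m} \<subseteq> R"
  proof (rule ccontr)
    assume "\<not> {1..m} \<subseteq> R"
    define S where "S = {1..m} - R"
    have "S \<noteq> {}" using \<open>\<not> {1..m} \<subseteq> R\<close> by (auto simp: S_def)
    moreover have "\<forall>j\<in>S. b j = 0"
    proof
      fix j assume jS: "j \<in> S"
      show "b j = 0"
      proof (rule ccontr)
        assume "b j \<noteq> 0"
        then have "j \<in> R" using jS good_one[of j m A b] by (auto simp: S_def R_def)
        then show False using jS by (simp add: S_def)
      qed
    qed
    moreover have "\<forall>i\<in>{1..m} - S. \<forall>j\<in>S. A i j = 0"
    proof (intro ballI)
      fix i j assume iS: "i \<in> {1..m} - S" and jS: "j \<in> S"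
      show "A i j = 0"
      proof (rule ccontr)
        assume nz: "A i j \<noteq> 0"
        have jm: "j \<in> {1..m}" "i \<in> {1..m}" using iS jS by (auto simp: S_def)
        have "j < i"
        proof (rule ccontr)
          assume "\<not> j < i"
          then show False using ex nz jm by (auto simp: rk_explicit_def)
        qed
        have "i \<in> R" using iS by (auto simp: S_def)
        then obtain k js where g: "good m k js" "js k = i" "cp A b js k \<noteq> 0" by (auto simp: R_def)
        from good_ext[OF g(1) jm(1), of A b] g \<open>j < i\<close> nz
        have "j \<in> R" unfolding R_def using jm
          by (intro CollectI conjI exI[of _ "Suc k"] exI[of _ "js(Suc k := j)"]) auto
        then show False using jS by (simp add: S_def)
      qed
    qed
    ultimately have "DJ_reducible m A b" unfolding DJ_reducible_def S_def by blast
    then show False using irr by (simp add: DJ_irreducible_def)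
  qed
  from neg show ?thesis
  proof
    assume "\<exists>i\<in>{1..m}. \<exists>j\<in>{1..m}. A i j < 0"
    then obtain i j where ij: "i \<in> {1..m}" "j \<in> {1..m}" "A i j < 0" by blast
    have "j < i"
    proof (rule ccontr)
      assume "\<not> j < i"
      then show False using ex ij by (auto simp: rk_explicit_def)
    qed
    obtain k js where g: "good m k js" "js k = i" "cp A b js k \<noteq> 0" using R ij unfolding R_def by blast
    show ?thesis
    proof (cases "cp A b js k < 0")
      case True then show ?thesis using g by blast
    next
      case False
      then have "cp A b js k > 0" using g by simp
      then have "cp A b js k * A (js k) j < 0" using ij g by (simp add: mult_pos_neg)
      moreover have e: "good m (Suc k) (js(Suc k := j)) \<and> cp A b (js(Suc k := j)) (Suc k) = cp A b js k * A (js k) j"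
        using good_ext[OF g(1) ij(2), of A b] g(2) \<open>j < i\<close> by simp
      ultimately show ?thesis by (metis (no_types))
    qed
  next
    assume "\<exists>j\<in>{1..m}. b j < 0"
    then obtain j where "j \<in> {1..m}" "b j < 0" by blast
    then have "good m 1 (\<lambda>_. j) \<and> cp A b (\<lambda>_. j) 1 < 0" using good_one[of j m A b] by simp
    then show ?thesis by blast
  qed
qed


theorem theorem3:
  fixes m :: nat and A :: "nat \<Rightarrow> nat \<Rightarrow> real" and b :: "nat \<Rightarrow> real"
  assumes "rk_explicit m A"
    and "rk_non_confluent m A"
    and "DJ_irreducible m A b"
    and "(\<exists>i\<in>{1..m}. \<exists>j\<in>{1..m}. A i j < 0) \<or> (\<exists>j\<in>{1..m}. b j < 0)"
  shows "(\<exists>N dx dt tn q u. N \<ge> 1 \<and> dx > 0 \<and> dt > 0 \<and>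
            (\<forall>k\<in>{1..N}. u k \<ge> 0) \<and> (\<forall>k v t. q k v t \<ge> 0) \<and>
            (\<exists>k\<in>{1..N}. ode_rk_step m A b N dx dt tn q u k < 0))
         \<and> rk_gamma m A b = 0"
proof -
  obtain i js where g: "good m i js" and neg: "cp A b js i < 0"
    using neg_chain[OF assms(1,3,4)] by blast
  have i1: "1 \<le> i" and jsm: "\<And>s. s \<in> {1..i} \<Longrightarrow> js s \<in> {1..m}"
    and dec: "\<And>s. 1 \<le> s \<Longrightarrow> s < i \<Longrightarrow> js (Suc s) < js s"
    using g by (auto simp: good_def)
  have im: "i \<le> m" using good_le[OF g] .
  have injc: "inj_on (rk_nodes m A) {1..m}" using assms(2) by (simp add: rk_non_confluent_def)
  have part1: "\<exists>N dx dt tn q u. N \<ge> 1 \<and> dx > 0 \<and> dt > 0 \<and>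
            (\<forall>k\<in>{1..N}. u k \<ge> 0) \<and> (\<forall>k v t. q k v t \<ge> 0) \<and>
            (\<exists>k\<in>{1..N}. ode_rk_step m A b N dx dt tn q u k < 0)"
  proof -
    define p where "p = (\<lambda>t::nat. i + 1 - t)"
    define q where "q = (\<lambda>(k::nat) (v::nat\<Rightarrow>real) (t::real). if \<exists>t'<i. k = p t' \<and> t = rk_nodes m A (js (Suc t')) then (1::real) else 0)"
    define u where "u = (\<lambda>k::nat. if k = 1 then (1::real) else 0)"
    define xi where "xi = (\<lambda>j k (Y::nat\<Rightarrow>real). 1 / 1 * q k (\<lambda>i. if i \<in> {1..m+1} then Y i else 0) (0 + rk_nodes m A j * 1))"
    have xi: "xi j k Y = (if \<exists>t<i. k = p t \<and> j = js (Suc t) then 1 else 0)" if j: "j \<in> {1..m}" for j k Y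
    proof -
      have "(\<exists>t<i. k = p t \<and> rk_nodes m A j = rk_nodes m A (js (Suc t))) \<longleftrightarrow> (\<exists>t<i. k = p t \<and> j = js (Suc t))"
      proof
        assume "\<exists>t<i. k = p t \<and> rk_nodes m A j = rk_nodes m A (js (Suc t))"
        then obtain t where t: "t < i" "k = p t" "rk_nodes m A j = rk_nodes m A (js (Suc t))" by blast
        have "js (Suc t) \<in> {1..m}" using jsm[of "Suc t"] t by simp
        then have "j = js (Suc t)" using injc j t(3) by (auto dest: inj_onD)
        then show "\<exists>t<i. k = p t \<and> j = js (Suc t)" using t by blast
      qed auto
      then show ?thesis by (simp add: xi_def q_def)
    qed
    have "rk_step m A b (per_prev (m+1)) xi u (p 0) = b (js 1) * (\<Prod>r\<in>{1..<i}. A (js r) (js (Suc r))) * 1 ^ i"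
    proof (rule step_chain[where js=js])
      show "inj_on p {0..i}" by (auto simp: p_def inj_on_def)
      show "\<And>t. t < i \<Longrightarrow> per_prev (m + 1) (p t) = p (Suc t)" by (auto simp: p_def per_prev_def)
      show "u (p i) = 1" by (simp add: u_def p_def)
      show "\<And>t. t < i \<Longrightarrow> u (p t) = 0" by (auto simp: u_def p_def)
    qed (use xi jsm dec i1 in auto)
    moreover have "ode_rk_step m A b (m+1) 1 1 0 q u = rk_step m A b (per_prev (m+1)) xi u"
      unfolding ode_rk_step_def xi_def by simp
    ultimately have "ode_rk_step m A b (m+1) 1 1 0 q u (p 0) < 0"
      using neg by (simp add: cp_def)
    moreover have "p 0 \<in> {1..m+1}" using im by (simp add: p_def)
    moreover have "\<forall>k v t. q k v t \<ge> 0" by (simp add: q_def)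
    moreover have "\<forall>k\<in>{1..m+1}. u k \<ge> 0" by (simp add: u_def)
    ultimately show ?thesis
      by (intro exI[of _ "m+1"] exI[of _ "1::real"] exI[of _ "0::real"] exI[of _ q] exI[of _ u]) auto
  qed
  have sub: "rk_gamma_set m A b \<subseteq> {0}"
  proof
    fix \<delta> assume d: "\<delta> \<in> rk_gamma_set m A b"
    show "\<delta> \<in> {0}"
    proof (rule ccontr)
      assume "\<delta> \<notin> {0}"
      with d have dpos: "\<delta> > 0" by (auto simp: rk_gamma_set_def)
      define p where "p = (\<lambda>t::nat. - int t)"
      define \<xi> where "\<xi> = (\<lambda>j (l::int). if \<exists>t<i. l = p t \<and> j = js (Suc t) then \<delta> else 0)"
      define u where "u = (\<lambda>l::int. if l = - int i then (1::real) else 0)"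
      have "rk_step m A b (\<lambda>l. l - 1) (\<lambda>j l Y. \<xi> j l) u (p 0) = b (js 1) * (\<Prod>r\<in>{1..<i}. A (js r) (js (Suc r))) * \<delta> ^ i"
      proof (rule step_chain[where js=js])
        show "inj_on p {0..i}" by (auto simp: p_def inj_on_def)
        show "\<And>t. t < i \<Longrightarrow> p t - 1 = p (Suc t)" by (auto simp: p_def)
        show "u (p i) = 1" by (simp add: u_def p_def)
        show "\<And>t. t < i \<Longrightarrow> u (p t) = 0" by (auto simp: u_def p_def)
      qed (use jsm dec i1 in \<open>auto simp: \<xi>_def\<close>)
      then have "rk_P m A b i \<xi> < 0"
        using neg dpos by (simp add: rk_P_def p_def u_def cp_def mult_neg_pos)
      moreover have "rk_P m A b i \<xi> \<ge> 0"
        using d im dpos by (auto simp: rk_gamma_set_def \<xi>_def)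
      ultimately show False by simp
    qed
  qed
  have "rk_gamma m A b = 0"
  proof (cases "rk_gamma_set m A b = {}")
    case True then show ?thesis by (simp add: rk_gamma_def)
  next
    case False
    with sub have "rk_gamma_set m A b = {0}" by blast
    then show ?thesis by (simp add: rk_gamma_def zero_ereal_def)
  qed
  with part1 show ?thesis by blast
qed

end
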